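(* Let $(\star)$ be a linear system over $\mathbb{F}_q$ in $k$ variables, and suppose that $(\star)$ is equivalent to a linear system $(\star')$ whose coefficient matrix (after reordering the variables) has the block form $\begin{pmatrix}A_1&0\\0&A_2\end{pmatrix}$ with $A_1\in\mathbb{F}_q^{m_1\times k_1}$, $A_2\in\mathbb{F}_q^{m_2\times k_2}$ and $m_1,m_2,k_1,k_2\ne0$. Then $(\star)$ is moderate if and only if the systems with coefficient matrices $A_1$ and $A_2$ are both moderate.
   Context: A linear system with coefficient matrix $A=(a_{ij})\in\mathbb{F}_q^{m\times k}$ has solutions $(x_1,\dots,x_k)\in(\mathbb{F}_q^n)^k$ with $\sum_j a_{ij}x_j=0$ for all $i$. Two systems are equivalent if each equation of one is a linear combination of the equations of the other. A $(\star)$-shape is a solution with $x_1,\dots,x_k$ pairwise distinct. A system is moderate if there exist constants $\beta,\gamma>0$ with $\gamma<q$ such that for every $n$, every $S\subseteq\mathbb{F}_q^n$ with $|S|\ge\beta\gamma^n$ contains a shape $(x_1,\dots,x_k)\in S^k$. *)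

theory Defs
  imports Complex_Main
begin

text \<open>The field F_q is a finite field type 'a (q = CARD('a)).
  A vector of F_q^n is a function nat \<Rightarrow> 'a vanishing outside {..<n}.
  A linear system with m equations in k variables is given by a coefficient
  function A :: nat \<Rightarrow> nat \<Rightarrow> 'a, of which only the entries A i j with
  i < m, j < k matter. A k-tuple (x_1,...,x_k) of vectors is a function
  x :: nat \<Rightarrow> (nat \<Rightarrow> 'a), indexed by j < k.\<close>

definition vecs :: "nat \<Rightarrow> (nat \<Rightarrow> 'a::zero) set" where
  "vecs n = {v. \<forall>t\<ge>n. v t = 0}"

definition is_solution ::
  "nat \<Rightarrow> nat \<Rightarrow> (nat \<Rightarrow> nat \<Rightarrow> 'a::field) \<Rightarrow> (nat \<Rightarrow> nat \<Rightarrow> 'a) \<Rightarrow> bool" where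
  "is_solution m k A x \<longleftrightarrow> (\<forall>i<m. \<forall>t. (\<Sum>j<k. A i j * x j t) = 0)"

definition is_shape ::
  "nat \<Rightarrow> nat \<Rightarrow> (nat \<Rightarrow> nat \<Rightarrow> 'a::field) \<Rightarrow> (nat \<Rightarrow> nat \<Rightarrow> 'a) \<Rightarrow> bool" where
  "is_shape m k A x \<longleftrightarrow> is_solution m k A x \<and> inj_on x {..<k}"

definition moderate :: "nat \<Rightarrow> nat \<Rightarrow> (nat \<Rightarrow> nat \<Rightarrow> 'a::{finite,field}) \<Rightarrow> bool" where
  "moderate m k A \<longleftrightarrow>
     (\<exists>\<beta> \<gamma> :: real. \<beta> > 0 \<and> \<gamma> > 0 \<and> \<gamma> < real (card (UNIV :: 'a set)) \<and>
        (\<forall>n. \<forall>S :: (nat \<Rightarrow> 'a) set. S \<subseteq> vecs n \<longrightarrow>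
            real (card S) \<ge> \<beta> * \<gamma> ^ n \<longrightarrow>
            (\<exists>x. (\<forall>j<k. x j \<in> S) \<and> is_shape m k A x)))"

definition rows_in_span ::
  "nat \<Rightarrow> nat \<Rightarrow> (nat \<Rightarrow> nat \<Rightarrow> 'a::field) \<Rightarrow> nat \<Rightarrow> (nat \<Rightarrow> nat \<Rightarrow> 'a) \<Rightarrow> bool" where
  "rows_in_span k m A m' B \<longleftrightarrow>
     (\<forall>i<m. \<exists>c. \<forall>j<k. A i j = (\<Sum>l<m'. c l * B l j))"

definition equiv_systems ::
  "nat \<Rightarrow> nat \<Rightarrow> (nat \<Rightarrow> nat \<Rightarrow> 'a::field) \<Rightarrow> nat \<Rightarrow> (nat \<Rightarrow> nat \<Rightarrow> 'a) \<Rightarrow> bool" where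
  "equiv_systems k m A m' B \<longleftrightarrow> rows_in_span k m A m' B \<and> rows_in_span k m' B m A"

definition block_diag ::
  "nat \<Rightarrow> nat \<Rightarrow> (nat \<Rightarrow> nat \<Rightarrow> 'a::zero) \<Rightarrow> (nat \<Rightarrow> nat \<Rightarrow> 'a) \<Rightarrow> nat \<Rightarrow> nat \<Rightarrow> 'a" where
  "block_diag m1 k1 A1 A2 i j =
     (if i < m1 \<and> j < k1 then A1 i j
      else if m1 \<le> i \<and> k1 \<le> j then A2 (i - m1) (j - k1) else 0)"

end

theory Submission imports Defs begin

lemma sum_split_add:
  fixes g :: "nat \<Rightarrow> 'b::comm_monoid_add"
  shows "sum g {..<k1+k2} = sum g {..<k1} + sum (\<lambda>l. g (l+k1)) {..<k2}"
proof -
  have "sum g {..<k1+k2} = sum g {0..<k1} + sum g {k1..<k1+k2}"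
    using sum.atLeastLessThan_concat[of 0 k1 "k1+k2" g] by (simp add: atLeast0LessThan)
  also have "sum g {k1..<k1+k2} = sum (\<lambda>l. g (l+k1)) {0..<k2}"
    using sum.shift_bounds_nat_ivl[of g 0 k1 k2] by (simp add: add.commute)
  finally show ?thesis by (simp add: atLeast0LessThan)
qed

lemma block1:
  fixes w :: "nat \<Rightarrow> 'a::field"
  assumes "i < mm"
  shows "(\<Sum>l<ka+kb. block_diag mm ka P Q i l * w l) = (\<Sum>l<ka. P i l * w l)"
  using assms by (simp add: sum_split_add block_diag_def)

lemma block2:
  fixes w :: "nat \<Rightarrow> 'a::field"
  assumes "i < mn"
  shows "(\<Sum>l<ka+kb. block_diag mm ka P Q (mm+i) l * w l) = (\<Sum>l<kb. Q i l * w (l+ka))"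
  using assms by (simp add: sum_split_add block_diag_def)

lemma rows_sol:
  assumes "rows_in_span k m A m' B" "is_solution m' k B x"
  shows "is_solution m k A x"
  unfolding is_solution_def
proof (intro allI impI)
  fix i t assume i: "i < m"
  then obtain c where c: "\<forall>j<k. A i j = (\<Sum>l<m'. c l * B l j)"
    using assms(1) unfolding rows_in_span_def by blast
  have "(\<Sum>j<k. A i j * x j t) = (\<Sum>j<k. \<Sum>l<m'. c l * B l j * x j t)"
    using c by (simp add: sum_distrib_right)
  also have "\<dots> = (\<Sum>l<m'. c l * (\<Sum>j<k. B l j * x j t))"
    by (subst sum.swap) (simp add: sum_distrib_left mult.assoc)
  also have "\<dots> = 0" using assms(2) unfolding is_solution_def by simp
  finally show "(\<Sum>j<k. A i j * x j t) = 0" .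
qed

lemma bsol:
  fixes A1 A2 :: "nat \<Rightarrow> nat \<Rightarrow> 'a::field" and z :: "nat \<Rightarrow> nat \<Rightarrow> 'a"
  assumes bij: "bij_betw \<sigma> {..<k1+k2} {..<k1+k2}"
    and s2: "\<And>j. j < k1+k2 \<Longrightarrow> \<tau> (\<sigma> j) = j"
  shows "is_solution (m1+m2) (k1+k2) (\<lambda>i j. block_diag m1 k1 A1 A2 i (\<sigma> j)) z \<longleftrightarrow>
     is_solution m1 k1 A1 (\<lambda>l. z (\<tau> l)) \<and> is_solution m2 k2 A2 (\<lambda>l. z (\<tau> (l+k1)))"
proof -
  have re: "(\<Sum>j<k1+k2. block_diag m1 k1 A1 A2 i (\<sigma> j) * z j t) =
            (\<Sum>l<k1+k2. block_diag m1 k1 A1 A2 i l * z (\<tau> l) t)" for i t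
  proof -
    have "(\<Sum>l<k1+k2. block_diag m1 k1 A1 A2 i l * z (\<tau> l) t)
       = (\<Sum>j<k1+k2. block_diag m1 k1 A1 A2 i (\<sigma> j) * z (\<tau> (\<sigma> j)) t)"
      using sum.reindex_bij_betw[OF bij, of "\<lambda>l. block_diag m1 k1 A1 A2 i l * z (\<tau> l) t"]
      by simp
    also have "\<dots> = (\<Sum>j<k1+k2. block_diag m1 k1 A1 A2 i (\<sigma> j) * z j t)"
      by (rule sum.cong) (auto simp: s2)
    finally show ?thesis by simp
  qed
  show ?thesis
  proof
    assume H: "is_solution (m1+m2) (k1+k2) (\<lambda>i j. block_diag m1 k1 A1 A2 i (\<sigma> j)) z"
    have "is_solution m1 k1 A1 (\<lambda>l. z (\<tau> l))"
      unfolding is_solution_def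
    proof (intro allI impI)
      fix i t assume i: "i < m1"
      have "(\<Sum>j<k1+k2. block_diag m1 k1 A1 A2 i (\<sigma> j) * z j t) = 0"
        using H i unfolding is_solution_def by simp
      then show "(\<Sum>j<k1. A1 i j * z (\<tau> j) t) = 0"
        using re block1[where ka=k1 and kb=k2 and P=A1 and Q=A2 and w="\<lambda>l. z (\<tau> l) t", OF i] by simp
    qed
    moreover have "is_solution m2 k2 A2 (\<lambda>l. z (\<tau> (l+k1)))"
      unfolding is_solution_def
    proof (intro allI impI)
      fix i t assume i: "i < m2"
      have "(\<Sum>j<k1+k2. block_diag m1 k1 A1 A2 (m1+i) (\<sigma> j) * z j t) = 0"
        using H i unfolding is_solution_def by simp
      then show "(\<Sum>j<k2. A2 i j * z (\<tau> (j+k1)) t) = 0"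
        using re block2[where ka=k1 and mm=m1 and P=A1 and Q=A2 and w="\<lambda>l. z (\<tau> l) t", OF i] by simp
    qed
    ultimately show "is_solution m1 k1 A1 (\<lambda>l. z (\<tau> l)) \<and> is_solution m2 k2 A2 (\<lambda>l. z (\<tau> (l+k1)))" ..
  next
    assume H: "is_solution m1 k1 A1 (\<lambda>l. z (\<tau> l)) \<and> is_solution m2 k2 A2 (\<lambda>l. z (\<tau> (l+k1)))"
    show "is_solution (m1+m2) (k1+k2) (\<lambda>i j. block_diag m1 k1 A1 A2 i (\<sigma> j)) z"
      unfolding is_solution_def
    proof (intro allI impI)
      fix i t assume i: "i < m1 + m2"
      show "(\<Sum>j<k1+k2. block_diag m1 k1 A1 A2 i (\<sigma> j) * z j t) = 0"
      proof (cases "i < m1")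
        case True
        then show ?thesis
          using H re block1[where ka=k1 and kb=k2 and P=A1 and Q=A2 and w="\<lambda>l. z (\<tau> l) t", OF True] unfolding is_solution_def by simp
      next
        case False
        then obtain i' where ii: "i = m1 + i'" "i' < m2" using i
          by (metis add_less_cancel_left le_add_diff_inverse not_less)
        then show ?thesis
          using H re block2[where ka=k1 and mm=m1 and P=A1 and Q=A2 and w="\<lambda>l. z (\<tau> l) t", OF ii(2)] unfolding is_solution_def by simp
      qed
    qed
  qed
qed

lemma sol_cong:
  assumes "\<And>j. j < k \<Longrightarrow> x j = y j"
  shows "is_solution m k A x = is_solution m k A y"
  unfolding is_solution_def using assms by simp

lemma card_ge2: "2 \<le> card (UNIV :: 'a::{finite,field} set)"
proof -
  have "card {0::'a, 1} = 2" by simp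
  moreover have "card {0::'a, 1} \<le> card (UNIV :: 'a set)" by (rule card_mono) auto
  ultimately show ?thesis by simp
qed

theorem proposition2p2:
  fixes A :: "nat \<Rightarrow> nat \<Rightarrow> 'a::{finite,field}"
    and A1 A2 :: "nat \<Rightarrow> nat \<Rightarrow> 'a"
    and m k m1 m2 k1 k2 :: nat
    and \<sigma> :: "nat \<Rightarrow> nat"
  assumes "m1 \<noteq> 0" "m2 \<noteq> 0" "k1 \<noteq> 0" "k2 \<noteq> 0"
    and "k = k1 + k2"
    and "bij_betw \<sigma> {..<k} {..<k}"
    and "equiv_systems k m A (m1 + m2) (\<lambda>i j. block_diag m1 k1 A1 A2 i (\<sigma> j))"
  shows "moderate m k A \<longleftrightarrow> moderate m1 k1 A1 \<and> moderate m2 k2 A2"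
proof -
  note bij = assms(6)
  define \<tau> where "\<tau> = inv_into {..<k} \<sigma>"
  have s2: "\<tau> (\<sigma> j) = j" if "j < k" for j
    unfolding \<tau>_def using bij_betw_inv_into_left[OF bij] that by simp
  have t2: "\<sigma> (\<tau> l) = l" if "l < k" for l
    unfolding \<tau>_def using bij_betw_inv_into_right[OF bij] that by simp
  have bijt: "bij_betw \<tau> {..<k} {..<k}" unfolding \<tau>_def by (rule bij_betw_inv_into[OF bij])
  have t1: "\<tau> l < k" if "l < k" for l using bij_betw_apply[OF bijt] that by simp
  have s1: "\<sigma> l < k" if "l < k" for l using bij_betw_apply[OF bij] that by simp
  have tinj: "\<tau> a = \<tau> b \<Longrightarrow> a < k \<Longrightarrow> b < k \<Longrightarrow> a = b" for a b
    using bijt unfolding bij_betw_def inj_on_def by simp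
  have sinj: "\<sigma> a = \<sigma> b \<Longrightarrow> a < k \<Longrightarrow> b < k \<Longrightarrow> a = b" for a b
    using bij unfolding bij_betw_def inj_on_def by simp
  have bij': "bij_betw \<sigma> {..<k1+k2} {..<k1+k2}" using bij assms(5) by simp
  have s2': "\<And>j. j < k1+k2 \<Longrightarrow> \<tau> (\<sigma> j) = j" using s2 assms(5) by simp
  have sol: "is_solution m k A z \<longleftrightarrow>
     is_solution m1 k1 A1 (\<lambda>l. z (\<tau> l)) \<and> is_solution m2 k2 A2 (\<lambda>l. z (\<tau> (l+k1)))" for z
  proof -
    have "is_solution m k A z \<longleftrightarrow> is_solution (m1+m2) k (\<lambda>i j. block_diag m1 k1 A1 A2 i (\<sigma> j)) z"
      using assms(7) rows_sol unfolding equiv_systems_def by metis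
    also have "\<dots> \<longleftrightarrow> is_solution m1 k1 A1 (\<lambda>l. z (\<tau> l)) \<and> is_solution m2 k2 A2 (\<lambda>l. z (\<tau> (l+k1)))"
      using bsol[OF bij' s2'] assms(5) by simp
    finally show ?thesis .
  qed
  show ?thesis
  proof
    assume "moderate m k A"
    then obtain \<beta> \<gamma> :: real where bg: "\<beta> > 0" "\<gamma> > 0" "\<gamma> < real (card (UNIV :: 'a set))"
      and H: "\<And>n S. S \<subseteq> vecs n \<Longrightarrow> real (card S) \<ge> \<beta> * \<gamma> ^ n \<Longrightarrow>
            (\<exists>x. (\<forall>j<k. x j \<in> S) \<and> is_shape m k A x)"
      unfolding moderate_def by blast
    have "moderate m1 k1 A1"
      unfolding moderate_def
    proof (rule exI[of _ \<beta>], rule exI[of _ \<gamma>], intro conjI allI impI)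
      fix n and S :: "(nat \<Rightarrow> 'a) set"
      assume "S \<subseteq> vecs n" "real (card S) \<ge> \<beta> * \<gamma> ^ n"
      then obtain z where z: "\<forall>j<k. z j \<in> S" "is_shape m k A z" using H by blast
      show "\<exists>x. (\<forall>j<k1. x j \<in> S) \<and> is_shape m1 k1 A1 x"
      proof (rule exI[of _ "\<lambda>l. z (\<tau> l)"], intro conjI allI impI)
        show "\<And>j. j < k1 \<Longrightarrow> z (\<tau> j) \<in> S" using z(1) t1 assms(5) by simp
        have "inj_on (\<lambda>l. z (\<tau> l)) {..<k1}"
          unfolding inj_on_def
        proof (intro ballI impI)
          fix a b assume ab: "a \<in> {..<k1}" "b \<in> {..<k1}" "z (\<tau> a) = z (\<tau> b)"
          then have "\<tau> a = \<tau> b" using z(2) t1 assms(5) unfolding is_shape_def inj_on_def by simp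
          then show "a = b" using tinj ab assms(5) by simp
        qed
        then show "is_shape m1 k1 A1 (\<lambda>l. z (\<tau> l))"
          using z(2) sol unfolding is_shape_def by blast
      qed
    qed (use bg in auto)
    moreover have "moderate m2 k2 A2"
      unfolding moderate_def
    proof (rule exI[of _ \<beta>], rule exI[of _ \<gamma>], intro conjI allI impI)
      fix n and S :: "(nat \<Rightarrow> 'a) set"
      assume "S \<subseteq> vecs n" "real (card S) \<ge> \<beta> * \<gamma> ^ n"
      then obtain z where z: "\<forall>j<k. z j \<in> S" "is_shape m k A z" using H by blast
      show "\<exists>x. (\<forall>j<k2. x j \<in> S) \<and> is_shape m2 k2 A2 x"
      proof (rule exI[of _ "\<lambda>l. z (\<tau> (l+k1))"], intro conjI allI impI)
        show "\<And>j. j < k2 \<Longrightarrow> z (\<tau> (j+k1)) \<in> S" using z(1) t1 assms(5) by simp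
        have "inj_on (\<lambda>l. z (\<tau> (l+k1))) {..<k2}"
          unfolding inj_on_def
        proof (intro ballI impI)
          fix a b assume ab: "a \<in> {..<k2}" "b \<in> {..<k2}" "z (\<tau> (a+k1)) = z (\<tau> (b+k1))"
          then have "\<tau> (a+k1) = \<tau> (b+k1)" using z(2) t1 assms(5) unfolding is_shape_def inj_on_def by simp
          then show "a = b" using tinj ab assms(5) by fastforce
        qed
        then show "is_shape m2 k2 A2 (\<lambda>l. z (\<tau> (l+k1)))"
          using z(2) sol unfolding is_shape_def by blast
      qed
    qed (use bg in auto)
    ultimately show "moderate m1 k1 A1 \<and> moderate m2 k2 A2" ..
  next
    assume "moderate m1 k1 A1 \<and> moderate m2 k2 A2"
    then obtain \<beta>1 \<gamma>1 \<beta>2 \<gamma>2 :: real where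
      bg1: "\<beta>1 > 0" "\<gamma>1 > 0" "\<gamma>1 < real (card (UNIV :: 'a set))"
      and H1: "\<And>n S. S \<subseteq> vecs n \<Longrightarrow> real (card S) \<ge> \<beta>1 * \<gamma>1 ^ n \<Longrightarrow>
            (\<exists>x. (\<forall>j<k1. x j \<in> S) \<and> is_shape m1 k1 A1 x)"
      and bg2: "\<beta>2 > 0" "\<gamma>2 > 0" "\<gamma>2 < real (card (UNIV :: 'a set))"
      and H2: "\<And>n S. S \<subseteq> vecs n \<Longrightarrow> real (card S) \<ge> \<beta>2 * \<gamma>2 ^ n \<Longrightarrow>
            (\<exists>x. (\<forall>j<k2. x j \<in> S) \<and> is_shape m2 k2 A2 x)"
      unfolding moderate_def by metis
    define \<gamma> where "\<gamma> = max (max \<gamma>1 \<gamma>2) 1"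
    define \<beta> where "\<beta> = \<beta>1 + \<beta>2 + real k1"
    have q2: "2 \<le> real (card (UNIV :: 'a set))" using card_ge2[where 'a='a] by linarith
    show "moderate m k A"
      unfolding moderate_def
    proof (rule exI[of _ \<beta>], rule exI[of _ \<gamma>], intro conjI allI impI)
      show "\<beta> > 0" "\<gamma> > 0" using bg1 bg2 unfolding \<beta>_def \<gamma>_def by auto
      show "\<gamma> < real (card (UNIV :: 'a set))" using bg1 bg2 q2 unfolding \<gamma>_def by auto
      fix n and S :: "(nat \<Rightarrow> 'a) set"
      assume Sv: "S \<subseteq> vecs n" and cS: "real (card S) \<ge> \<beta> * \<gamma> ^ n"
      have g1: "\<gamma> ^ n \<ge> 1" unfolding \<gamma>_def by (rule one_le_power) simp
      have p1: "\<gamma>1 ^ n \<le> \<gamma> ^ n" using bg1 unfolding \<gamma>_def by (intro power_mono) auto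
      have p2: "\<gamma>2 ^ n \<le> \<gamma> ^ n" using bg2 unfolding \<gamma>_def by (intro power_mono) auto
      have "\<beta>1 * \<gamma>1 ^ n \<le> \<beta>1 * \<gamma> ^ n" using p1 bg1 by simp
      also have "\<dots> \<le> \<beta> * \<gamma> ^ n" using g1 bg2 unfolding \<beta>_def by (simp add: mult_right_mono)
      finally have c1: "\<beta>1 * \<gamma>1 ^ n \<le> real (card S)" using cS by linarith
      have "0 < \<beta>1 * \<gamma>1 ^ n" using bg1 by simp
      then have "0 < real (card S)" using c1 by linarith
      then have "card S > 0" by simp
      then have finS: "finite S" using card.infinite by force
      obtain x where x: "\<forall>j<k1. x j \<in> S" "is_shape m1 k1 A1 x" using H1[OF Sv c1] by blast
      define S' where "S' = S - x ` {..<k1}"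
      have "S \<subseteq> S' \<union> x ` {..<k1}" unfolding S'_def by auto
      then have "card S \<le> card (S' \<union> x ` {..<k1})" by (rule card_mono[rotated]) (simp add: S'_def finS)
      also have "\<dots> \<le> card S' + card (x ` {..<k1})" by (rule card_Un_le)
      also have "\<dots> \<le> card S' + k1" using card_image_le[of "{..<k1}" x] by simp
      finally have cS': "real (card S) \<le> real (card S') + real k1" by linarith
      have "\<beta>2 * \<gamma>2 ^ n + real k1 \<le> \<beta>2 * \<gamma> ^ n + real k1 * \<gamma> ^ n"
      proof -
        have "\<beta>2 * \<gamma>2 ^ n \<le> \<beta>2 * \<gamma> ^ n" using p2 bg2 by simp
        moreover have "real k1 * 1 \<le> real k1 * \<gamma> ^ n" using g1 by (intro mult_left_mono) auto
        ultimately show ?thesis by simp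
      qed
      also have "\<dots> \<le> \<beta> * \<gamma> ^ n" unfolding \<beta>_def using bg1 g1
        by (simp add: algebra_simps)
      finally have c2: "\<beta>2 * \<gamma>2 ^ n \<le> real (card S')" using cS cS' by linarith
      have S'v: "S' \<subseteq> vecs n" using Sv unfolding S'_def by auto
      obtain y where y: "\<forall>j<k2. y j \<in> S'" "is_shape m2 k2 A2 y" using H2[OF S'v c2] by blast
      define z where "z j = (if \<sigma> j < k1 then x (\<sigma> j) else y (\<sigma> j - k1))" for j
      have zx: "z (\<tau> l) = x l" if "l < k1" for l using that t2 assms(5) unfolding z_def by simp
      have zy: "z (\<tau> (l+k1)) = y l" if "l < k2" for l using that t2 assms(5) unfolding z_def by simp
      show "\<exists>x. (\<forall>j<k. x j \<in> S) \<and> is_shape m k A x"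
      proof (rule exI[of _ z], intro conjI allI impI)
        show "z j \<in> S" if "j < k" for j
          using x(1) y(1) s1[OF that] assms(5) unfolding z_def S'_def by auto
        have "is_solution m1 k1 A1 (\<lambda>l. z (\<tau> l))"
          using x(2) sol_cong[of k1 "\<lambda>l. z (\<tau> l)" x] zx unfolding is_shape_def by simp
        moreover have "is_solution m2 k2 A2 (\<lambda>l. z (\<tau> (l+k1)))"
          using y(2) sol_cong[of k2 "\<lambda>l. z (\<tau> (l+k1))" y] zy unfolding is_shape_def by simp
        ultimately have "is_solution m k A z" using sol by blast
        moreover have "inj_on z {..<k}"
          unfolding inj_on_def
        proof (intro ballI impI)
          fix a b assume ab: "a \<in> {..<k}" "b \<in> {..<k}" and e: "z a = z b"
          have sa: "\<sigma> a < k" "\<sigma> b < k" using ab s1 by auto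
          have xi: "inj_on x {..<k1}" and yi: "inj_on y {..<k2}"
            using x(2) y(2) unfolding is_shape_def by auto
          have "\<sigma> a = \<sigma> b"
          proof (cases "\<sigma> a < k1"; cases "\<sigma> b < k1")
            assume "\<sigma> a < k1" "\<sigma> b < k1"
            then show ?thesis using e xi unfolding z_def inj_on_def by simp
          next
            assume h: "\<sigma> a < k1" "\<not> \<sigma> b < k1"
            then have "y (\<sigma> b - k1) \<in> S'" using y(1) sa assms(5) by simp
            moreover have "x (\<sigma> a) \<in> x ` {..<k1}" using h by simp
            moreover have "x (\<sigma> a) = y (\<sigma> b - k1)" using e h unfolding z_def by simp
            ultimately show ?thesis unfolding S'_def by simp
          next
            assume h: "\<not> \<sigma> a < k1" "\<sigma> b < k1"
            then have "y (\<sigma> a - k1) \<in> S'" using y(1) sa assms(5) by simp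
            moreover have "x (\<sigma> b) \<in> x ` {..<k1}" using h by simp
            moreover have "x (\<sigma> b) = y (\<sigma> a - k1)" using e h unfolding z_def by simp
            ultimately show ?thesis unfolding S'_def by simp
          next
            assume h: "\<not> \<sigma> a < k1" "\<not> \<sigma> b < k1"
            then have "\<sigma> a - k1 = \<sigma> b - k1" using e yi sa assms(5) unfolding z_def inj_on_def by simp
            then show ?thesis using h by simp
          qed
          then show "a = b" using sinj ab by simp
        qed
        ultimately show "is_shape m k A z" unfolding is_shape_def by simp
      qed
    qed
  qed
qed

end
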